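(* Let $\mathcal G=(V,E)$ be a finite DAG in which every vertex has either $0$ or exactly $k$ parents, for a fixed $k\ge1$, and which has at least one vertex of depth one. Let $X$ be a BN with full support on $\mathcal G$ with states $\mathcal A$ whose non-trivial CPDs all coincide: for each $v\in V_p$ the parents are ordered as $(p_1(v),\dots,p_k(v))$ and there is a single kernel $Q:\mathcal A^k\times\mathcal A\to[0,1]$ with $\mathbb P(X_v=c\mid X_{p_1(v)}=a_1,\dots,X_{p_k(v)}=a_k)=Q(a_1,\dots,a_k;c)$ for all $v\in V_p$. Let $f:\mathcal A\to\mathcal B$ be a surjection and $U_v=f(X_v)$. Then (D3) holds if and only if for all $w,\tilde w\in\mathcal A^k$ with $f(w)=f(\tilde w)$ (coordinatewise) and all $b\in\mathcal B$, $\sum_{c\in f^{-1}(b)}Q(w;c)=\sum_{c\in f^{-1}(b)}Q(\tilde w;c)$.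
   Context: $pa(v)$ parents; $V_s$ parentless vertices, $V_p=V\setminus V_s$; $depth(v)$ maximal number of edges of a directed path from a vertex of $V_s$ to $v$. A BN on $\mathcal G$ with states $\mathcal A$ (finite) is specified by distributions $\alpha_v$ on $\mathcal A$ for $v\in V_s$ and CPDs $P_v(\cdot\mid a_{pa(v)})$ for $v\in V_p$; law $\prod_{v\in V_s}\alpha_v(x_v)\prod_{v\in V_p}P_v(x_v\mid x_{pa(v)})$; full support: all $x\in\mathcal A^V$ have positive probability. $\mathbb P_{\tilde\alpha}$ is the law with the same CPDs and initial distribution $\tilde\alpha$. (D3): for every initial distribution $\tilde\alpha$, $(U_v)$ under $\mathbb P_{\tilde\alpha}$ factorises over $\mathcal G$ (law of form $\prod_vq_v(u_v\mid u_{pa(v)})$), and for every $v\in V_p$, $b_v$, $b_{pa(v)}$ the value $\mathbb P_{\tilde\alpha}(U_v=b_v\mid U_{pa(v)}=b_{pa(v)})$ is the same for all $\tilde\alpha$ with $\mathbb P_{\tilde\alpha}(U_{pa(v)}=b_{pa(v)})>0$. *)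

theory Defs
  imports Complex_Main
begin

text \<open>A finite DAG on the finite vertex type 'v, given by an ordered parent list
  par v = (p_1(v), ..., p_k(v)); par v = [] means v is parentless (v in V_s).\<close>

definition parent_rel :: "('v \<Rightarrow> 'v list) \<Rightarrow> ('v \<times> 'v) set" where
  "parent_rel par = {(u, v). u \<in> set (par v)}"

definition is_dag :: "('v \<Rightarrow> 'v list) \<Rightarrow> bool" where
  "is_dag par \<longleftrightarrow> (\<forall>v. distinct (par v)) \<and> acyclic (parent_rel par)"

definition dpath :: "('v \<Rightarrow> 'v list) \<Rightarrow> 'v list \<Rightarrow> bool" where
  "dpath par xs \<longleftrightarrow> xs \<noteq> [] \<and> (\<forall>i. Suc i < length xs \<longrightarrow> xs ! i \<in> set (par (xs ! Suc i)))"

definition depth :: "('v \<Rightarrow> 'v list) \<Rightarrow> 'v \<Rightarrow> nat" where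
  "depth par v = Max {length xs - 1 | xs. dpath par xs \<and> par (hd xs) = [] \<and> last xs = v}"

definition init_dist :: "('v \<Rightarrow> 'v list) \<Rightarrow> ('v \<Rightarrow> 'a::finite \<Rightarrow> real) \<Rightarrow> bool" where
  "init_dist par \<alpha> \<longleftrightarrow> (\<forall>v. par v = [] \<longrightarrow> (\<forall>a. 0 \<le> \<alpha> v a) \<and> sum (\<alpha> v) UNIV = 1)"

definition is_kernel :: "nat \<Rightarrow> ('a list \<Rightarrow> 'a::finite \<Rightarrow> real) \<Rightarrow> bool" where
  "is_kernel k Q \<longleftrightarrow> (\<forall>w. length w = k \<longrightarrow> (\<forall>c. 0 \<le> Q w c) \<and> sum (Q w) UNIV = 1)"

definition bn_joint :: "('v::finite \<Rightarrow> 'v list) \<Rightarrow> ('a list \<Rightarrow> 'a \<Rightarrow> real) \<Rightarrow> ('v \<Rightarrow> 'a \<Rightarrow> real)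
    \<Rightarrow> ('v \<Rightarrow> 'a) \<Rightarrow> real" where
  "bn_joint par Q \<alpha> x = (\<Prod>v\<in>UNIV. if par v = [] then \<alpha> v (x v) else Q (map x (par v)) (x v))"

definition probU :: "('v::finite \<Rightarrow> 'v list) \<Rightarrow> ('a::finite list \<Rightarrow> 'a \<Rightarrow> real) \<Rightarrow> ('a \<Rightarrow> 'b)
    \<Rightarrow> ('v \<Rightarrow> 'a \<Rightarrow> real) \<Rightarrow> (('v \<Rightarrow> 'b) \<Rightarrow> bool) \<Rightarrow> real" where
  "probU par Q f \<alpha> E = (\<Sum>x\<in>{x. E (f \<circ> x)}. bn_joint par Q \<alpha> x)"

definition D3 :: "('v::finite \<Rightarrow> 'v list) \<Rightarrow> ('a::finite list \<Rightarrow> 'a \<Rightarrow> real) \<Rightarrow> ('a \<Rightarrow> 'b) \<Rightarrow> bool" where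
  "D3 par Q f \<longleftrightarrow>
     (\<forall>\<alpha>. init_dist par \<alpha> \<longrightarrow>
        (\<exists>q :: 'v \<Rightarrow> 'b list \<Rightarrow> 'b \<Rightarrow> real.
           (\<forall>v bs. (\<forall>b. 0 \<le> q v bs b) \<and> sum (q v bs) UNIV = 1) \<and>
           (\<forall>u. probU par Q f \<alpha> (\<lambda>u'. u' = u) = (\<Prod>v\<in>UNIV. q v (map u (par v)) (u v)))))
   \<and> (\<forall>v bs b \<alpha>1 \<alpha>2. par v \<noteq> [] \<and> init_dist par \<alpha>1 \<and> init_dist par \<alpha>2
        \<and> probU par Q f \<alpha>1 (\<lambda>u. map u (par v) = bs) > 0
        \<and> probU par Q f \<alpha>2 (\<lambda>u. map u (par v) = bs) > 0
        \<longrightarrow> probU par Q f \<alpha>1 (\<lambda>u. u v = b \<and> map u (par v) = bs) / probU par Q f \<alpha>1 (\<lambda>u. map u (par v) = bs)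
          = probU par Q f \<alpha>2 (\<lambda>u. u v = b \<and> map u (par v) = bs) / probU par Q f \<alpha>2 (\<lambda>u. map u (par v) = bs))"

end

theory Submission
  imports Defs "HOL-Library.FuncSet"
begin

definition loc :: "('v \<Rightarrow> 'v list) \<Rightarrow> ('v \<Rightarrow> ('v \<Rightarrow> 'a) \<Rightarrow> real) \<Rightarrow> bool" where
  "loc par cp \<longleftrightarrow> (\<forall>t x y. (\<forall>s\<in>insert t (set (par t)). x s = y s) \<longrightarrow> cp t x = cp t y)"

definition ancestral :: "('v \<Rightarrow> 'v list) \<Rightarrow> 'v set \<Rightarrow> bool" where
  "ancestral par S \<longleftrightarrow> (\<forall>t\<in>S. set (par t) \<subseteq> S)"

lemma sum_PiE_remove:
  assumes "w \<in> S" "finite S"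
  shows "(\<Sum>x\<in>PiE S (\<lambda>_. UNIV::'a::finite set). F x) = (\<Sum>y\<in>PiE (S-{w}) (\<lambda>_. UNIV). \<Sum>c\<in>UNIV. F (y(w:=c)))"
proof -
  have S: "S = insert w (S - {w})" using assms by auto
  have "(\<Sum>x\<in>PiE S (\<lambda>_. UNIV::'a set). F x) = (\<Sum>x\<in>(\<lambda>(y, g). g(w := y)) ` (UNIV \<times> PiE (S-{w}) (\<lambda>_. UNIV::'a set)). F x)"
    by (subst S, subst PiE_insert_eq) simp
  also have "\<dots> = (\<Sum>p\<in>UNIV \<times> PiE (S-{w}) (\<lambda>_. UNIV::'a set). F ((\<lambda>(y, g). g(w := y)) p))"
    by (rule sum.reindex[unfolded comp_def]) (rule inj_combinator[where T="\<lambda>_. UNIV", simplified], simp)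
  also have "\<dots> = (\<Sum>c\<in>UNIV. \<Sum>y\<in>PiE (S-{w}) (\<lambda>_. UNIV::'a set). F (y(w:=c)))"
    by (subst sum.cartesian_product) (simp add: split_def)
  also have "\<dots> = (\<Sum>y\<in>PiE (S-{w}) (\<lambda>_. UNIV). \<Sum>c\<in>UNIV. F (y(w:=c)))"
    by (rule sum.swap)
  finally show ?thesis .
qed

lemma prod_split:
  assumes "loc par cp" "w \<in> S" "finite S" "\<forall>t\<in>S. w \<notin> set (par t)"
  shows "(\<Prod>t\<in>S. cp t (y(w:=c))) = cp w (y(w:=c)) * (\<Prod>t\<in>S-{w}. cp t y)"
proof -
  have "(\<Prod>t\<in>S. cp t (y(w:=c))) = cp w (y(w:=c)) * (\<Prod>t\<in>S-{w}. cp t (y(w:=c)))"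
    using assms by (simp add: prod.remove)
  also have "(\<Prod>t\<in>S-{w}. cp t (y(w:=c))) = (\<Prod>t\<in>S-{w}. cp t y)"
  proof (rule prod.cong)
    fix t assume t: "t \<in> S - {w}"
    show "cp t (y(w:=c)) = cp t y"
      using assms(1) t assms(4) unfolding loc_def by (metis DiffD1 DiffD2 fun_upd_other insert_iff singletonI)
  qed simp
  finally show ?thesis .
qed

lemma sink_exists:
  fixes par :: "'v::finite \<Rightarrow> 'v list"
  assumes "acyclic (parent_rel par)" "S \<noteq> {}"
  shows "\<exists>w\<in>S. \<forall>t\<in>S. w \<notin> set (par t)"
proof -
  have fin: "finite (parent_rel par)" by (rule finite_subset[of _ UNIV]) auto
  have "wf ((parent_rel par)\<inverse>)" using finite_acyclic_wf_converse[OF fin assms(1)] .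
  then obtain z where "z \<in> S" "\<forall>y. (y, z) \<in> (parent_rel par)\<inverse> \<longrightarrow> y \<notin> S"
    using assms(2) unfolding wf_eq_minimal by blast
  then show ?thesis unfolding parent_rel_def by auto
qed

lemma not_self_parent:
  assumes "acyclic (parent_rel par)" shows "w \<notin> set (par w)"
  using assms unfolding acyclic_def parent_rel_def by blast

lemma marg:
  fixes par :: "'v::finite \<Rightarrow> 'v list" and cp :: "'v \<Rightarrow> ('v \<Rightarrow> 'a::finite) \<Rightarrow> real"
  assumes acyc: "acyclic (parent_rel par)" and lc: "loc par cp" and aR: "ancestral par R"
    and Edep: "\<forall>x y. (\<forall>t\<in>R. x t = y t) \<longrightarrow> E x = E y"
    and stoch: "\<forall>t. t \<notin> R \<longrightarrow> (\<forall>y. (\<Sum>c\<in>UNIV. cp t (y(t:=c))) = 1)"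
  shows "card (S - R) = n \<Longrightarrow> R \<subseteq> S \<Longrightarrow> ancestral par S \<Longrightarrow>
    (\<Sum>x\<in>PiE S (\<lambda>_. UNIV). E x * (\<Prod>t\<in>S. cp t x)) = (\<Sum>x\<in>PiE R (\<lambda>_. UNIV). E x * (\<Prod>t\<in>R. cp t x))"
proof (induction n arbitrary: S rule: less_induct)
  case (less n)
  show ?case
  proof (cases "S = R")
    case True then show ?thesis by simp
  next
    case False
    then have ne: "S - R \<noteq> {}" using less.prems by auto
    obtain w where w: "w \<in> S - R" "\<forall>t\<in>S - R. w \<notin> set (par t)"
      using sink_exists[OF acyc ne] by blast
    have wS: "\<forall>t\<in>S. w \<notin> set (par t)" using w aR unfolding ancestral_def by blast
    define S' where "S' = S - {w}"
    have aS': "ancestral par S'" using less.prems(3) wS unfolding ancestral_def S'_def by blast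
    have RS': "R \<subseteq> S'" using less.prems(2) w unfolding S'_def by blast
    have "S' - R = (S - R) - {w}" unfolding S'_def by blast
    then have cS': "card (S' - R) < n" using less.prems(1) w card_Diff1_less[of "S - R" w] by simp
    have "(\<Sum>x\<in>PiE S (\<lambda>_. UNIV). E x * (\<Prod>t\<in>S. cp t x))
        = (\<Sum>y\<in>PiE S' (\<lambda>_. UNIV). \<Sum>c\<in>UNIV. E (y(w:=c)) * (\<Prod>t\<in>S. cp t (y(w:=c))))"
      unfolding S'_def using w by (intro sum_PiE_remove) auto
    also have "\<dots> = (\<Sum>y\<in>PiE S' (\<lambda>_. UNIV). E y * (\<Prod>t\<in>S'. cp t y) * (\<Sum>c\<in>UNIV. cp w (y(w:=c))))"
    proof (rule sum.cong[OF refl])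
      fix y
      have "\<And>c. E (y(w:=c)) = E y" using Edep w by auto
      moreover have "\<And>c. (\<Prod>t\<in>S. cp t (y(w:=c))) = cp w (y(w:=c)) * (\<Prod>t\<in>S'. cp t y)"
        unfolding S'_def using w wS by (intro prod_split[OF lc]) auto
      ultimately show "(\<Sum>c\<in>UNIV. E (y(w:=c)) * (\<Prod>t\<in>S. cp t (y(w:=c)))) = E y * (\<Prod>t\<in>S'. cp t y) * (\<Sum>c\<in>UNIV. cp w (y(w:=c)))"
        by (simp add: sum_distrib_left mult_ac)
    qed
    also have "\<dots> = (\<Sum>y\<in>PiE S' (\<lambda>_. UNIV). E y * (\<Prod>t\<in>S'. cp t y))"
      using stoch w by simp
    also have "\<dots> = (\<Sum>x\<in>PiE R (\<lambda>_. UNIV). E x * (\<Prod>t\<in>R. cp t x))"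
      using less.IH[OF cS' refl RS' aS'] .
    finally show ?thesis .
  qed
qed

lemma factor:
  fixes par :: "'v::finite \<Rightarrow> 'v list" and g :: "'v \<Rightarrow> ('v \<Rightarrow> 'a::finite) \<Rightarrow> real"
  assumes acyc: "acyclic (parent_rel par)" and lc: "loc par g"
    and Z: "\<forall>t y. (\<Sum>c\<in>UNIV. g t (y(t:=c))) = r t \<or> (\<exists>s\<in>set (par t). g s y = 0)"
  shows "card S = n \<Longrightarrow> ancestral par S \<Longrightarrow>
    (\<Sum>x\<in>PiE S (\<lambda>_. UNIV). \<Prod>t\<in>S. g t x) = (\<Prod>t\<in>S. r t)"
proof (induction n arbitrary: S rule: less_induct)
  case (less n)
  show ?case
  proof (cases "S = {}")
    case True then show ?thesis by simp
  next
    case False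
    obtain w where w: "w \<in> S" "\<forall>t\<in>S. w \<notin> set (par t)"
      using sink_exists[OF acyc False] by blast
    define S' where "S' = S - {w}"
    have aS': "ancestral par S'" using less.prems(2) w unfolding ancestral_def S'_def by blast
    have cS': "card S' < n" using less.prems(1) w unfolding S'_def by (metis card_Diff1_less finite)
    have "(\<Sum>x\<in>PiE S (\<lambda>_. UNIV). \<Prod>t\<in>S. g t x)
        = (\<Sum>y\<in>PiE S' (\<lambda>_. UNIV). \<Sum>c\<in>UNIV. \<Prod>t\<in>S. g t (y(w:=c)))"
      unfolding S'_def using w by (intro sum_PiE_remove) auto
    also have "\<dots> = (\<Sum>y\<in>PiE S' (\<lambda>_. UNIV). r w * (\<Prod>t\<in>S'. g t y))"
    proof (rule sum.cong[OF refl])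
      fix y
      have "\<And>c. (\<Prod>t\<in>S. g t (y(w:=c))) = g w (y(w:=c)) * (\<Prod>t\<in>S'. g t y)"
        unfolding S'_def using w by (intro prod_split[OF lc]) auto
      then have "(\<Sum>c\<in>UNIV. \<Prod>t\<in>S. g t (y(w:=c))) = (\<Sum>c\<in>UNIV. g w (y(w:=c))) * (\<Prod>t\<in>S'. g t y)"
        by (simp add: sum_distrib_right)
      also have "\<dots> = r w * (\<Prod>t\<in>S'. g t y)"
      proof (cases "(\<Sum>c\<in>UNIV. g w (y(w:=c))) = r w")
        case True then show ?thesis by simp
      next
        case False
        then obtain s where s: "s \<in> set (par w)" "g s y = 0" using Z by blast
        have "s \<in> S'" using s(1) less.prems(2) w not_self_parent[OF acyc, of w]
          unfolding ancestral_def S'_def by auto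
        then have "(\<Prod>t\<in>S'. g t y) = 0" using s(2) by (intro prod_zero) auto
        then show ?thesis by simp
      qed
      finally show "(\<Sum>c\<in>UNIV. \<Prod>t\<in>S. g t (y(w:=c))) = r w * (\<Prod>t\<in>S'. g t y)" .
    qed
    also have "\<dots> = r w * (\<Prod>t\<in>S'. r t)"
      by (simp add: sum_distrib_left[symmetric] less.IH[OF cS' refl aS'])
    also have "\<dots> = (\<Prod>t\<in>S. r t)"
      unfolding S'_def using w by (simp add: prod.remove)
    finally show ?thesis .
  qed
qed

lemma dpath_trancl:
  assumes "dpath par xs"
  shows "j < length xs \<Longrightarrow> i < j \<Longrightarrow> (xs!i, xs!j) \<in> (parent_rel par)\<^sup>+"
proof (induction j)
  case 0 then show ?case by simp
next
  case (Suc j)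
  have e: "(xs!j, xs!Suc j) \<in> parent_rel par" using assms Suc.prems unfolding dpath_def parent_rel_def by auto
  show ?case
  proof (cases "i = j")
    case True then show ?thesis using e by auto
  next
    case False
    then have "(xs!i, xs!j) \<in> (parent_rel par)\<^sup>+" using Suc by auto
    then show ?thesis using e by (rule trancl_into_trancl)
  qed
qed

lemma dpath_distinct:
  assumes "acyclic (parent_rel par)" "dpath par xs" shows "distinct xs"
proof -
  { fix i j assume ij: "i < j" "j < length xs" "xs!i = xs!j"
    then have "(xs!i, xs!i) \<in> (parent_rel par)\<^sup>+" using dpath_trancl[OF assms(2) ij(2,1)] by simp
    then have False using assms(1) unfolding acyclic_def by blast }
  then show ?thesis unfolding distinct_conv_nth by (metis linorder_neqE_nat)
qed

lemma dpath_snoc: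
  assumes "dpath par xs" "last xs \<in> set (par y)" shows "dpath par (xs @ [y])"
  unfolding dpath_def
proof (intro conjI allI impI)
  show "xs @ [y] \<noteq> []" by simp
next
  fix i assume i: "Suc i < length (xs @ [y])"
  show "(xs @ [y]) ! i \<in> set (par ((xs @ [y]) ! Suc i))"
  proof (cases "Suc i < length xs")
    case True then show ?thesis using assms(1) unfolding dpath_def by (simp add: nth_append)
  next
    case False
    then have "i = length xs - 1" "xs \<noteq> []" using i assms(1) unfolding dpath_def by auto
    then show ?thesis using assms(2) by (simp add: nth_append last_conv_nth)
  qed
qed

lemma path_to:
  fixes par :: "'v::finite \<Rightarrow> 'v list"
  assumes "acyclic (parent_rel par)"
  shows "\<exists>xs. dpath par xs \<and> par (hd xs) = [] \<and> last xs = r"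
proof -
  have fin: "finite (parent_rel par)" by (rule finite_subset[of _ UNIV]) auto
  have wf: "wf (parent_rel par)" using finite_acyclic_wf[OF fin assms] .
  show ?thesis
  proof (induction r rule: wf_induct[OF wf])
    case (1 r)
    show ?case
    proof (cases "par r = []")
      case True then show ?thesis by (intro exI[of _ "[r]"]) (simp add: dpath_def)
    next
      case False
      then have "(hd (par r), r) \<in> parent_rel par" unfolding parent_rel_def by simp
      then obtain xs where xs: "dpath par xs" "par (hd xs) = []" "last xs = hd (par r)" using 1 by blast
      have "dpath par (xs @ [r])" using xs False by (intro dpath_snoc) auto
      moreover have "xs \<noteq> []" using xs(1) unfolding dpath_def by simp
      ultimately show ?thesis using xs by (intro exI[of _ "xs @ [r]"]) simp
    qed
  qed
qed

lemma depth_one: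
  fixes par :: "'v::finite \<Rightarrow> 'v list"
  assumes dag: "is_dag par" and d: "depth par v = 1"
  shows "par v \<noteq> [] \<and> (\<forall>p\<in>set (par v). par p = [])"
proof -
  have acyc: "acyclic (parent_rel par)" using dag unfolding is_dag_def by simp
  define PS where "PS = {length xs - 1 | xs. dpath par xs \<and> par (hd xs) = [] \<and> last xs = v}"
  have MPS: "Max PS = 1" using d unfolding depth_def PS_def by simp
  have "PS \<subseteq> {..card (UNIV::'v set)}"
  proof
    fix n assume "n \<in> PS"
    then obtain xs where "n = length xs - 1" "dpath par xs" unfolding PS_def by blast
    moreover have "length xs \<le> card (UNIV::'v set)"
      using dpath_distinct[OF acyc \<open>dpath par xs\<close>] by (metis card_mono distinct_card finite subset_UNIV)
    ultimately show "n \<in> {..card (UNIV::'v set)}" by simp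
  qed
  then have finPS: "finite PS" by (rule finite_subset) simp
  have "par v \<noteq> []"
  proof
    assume pv: "par v = []"
    have "[v] \<in> {xs. dpath par xs \<and> par (hd xs) = [] \<and> last xs = v}" using pv by (simp add: dpath_def)
    then have ne: "PS \<noteq> {}" unfolding PS_def by blast
    have "\<forall>n\<in>PS. n = 0"
    proof
      fix n assume "n \<in> PS"
      then obtain xs where xs: "n = length xs - 1" "dpath par xs" "last xs = v" unfolding PS_def by blast
      show "n = 0"
      proof (rule ccontr)
        assume "n \<noteq> 0"
        then have l: "Suc (length xs - 2) < length xs" "Suc (length xs - 2) = length xs - 1" using xs by auto
        have "xs ! (length xs - 2) \<in> set (par (xs ! Suc (length xs - 2)))" using xs(2) l(1) unfolding dpath_def by blast
        moreover have "xs ! Suc (length xs - 2) = v" using l xs(2,3) unfolding dpath_def by (simp add: last_conv_nth)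
        ultimately show False using pv by simp
      qed
    qed
    then have "Max PS = 0" using Max_in[OF finPS ne] by blast
    then show False using MPS by simp
  qed
  moreover have "\<forall>p\<in>set (par v). par p = []"
  proof (rule ccontr)
    assume "\<not> (\<forall>p\<in>set (par v). par p = [])"
    then obtain p where p: "p \<in> set (par v)" "par p \<noteq> []" by blast
    obtain xs where xs: "dpath par xs" "par (hd xs) = []" "last xs = hd (par p)" using path_to[OF acyc] by blast
    have ne: "xs \<noteq> []" using xs(1) unfolding dpath_def by simp
    have d1: "dpath par (xs @ [p])" using xs p by (intro dpath_snoc) auto
    have d2: "dpath par ((xs @ [p]) @ [v])" using p by (rule_tac dpath_snoc[OF d1]) simp
    have "length ((xs @ [p]) @ [v]) - 1 \<in> PS" unfolding PS_def using d2 xs ne by fastforce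
    then have "length ((xs @ [p]) @ [v]) - 1 \<le> Max PS" using finPS by simp
    then show False using MPS ne by simp
  qed
  ultimately show ?thesis by simp
qed

definition cpd :: "('v \<Rightarrow> 'v list) \<Rightarrow> ('a list \<Rightarrow> 'a \<Rightarrow> real) \<Rightarrow> ('v \<Rightarrow> 'a \<Rightarrow> real) \<Rightarrow> 'v \<Rightarrow> ('v \<Rightarrow> 'a) \<Rightarrow> real" where
  "cpd par Q \<alpha> t x = (if par t = [] then \<alpha> t (x t) else Q (map x (par t)) (x t))"

lemma loc_cpd: "loc par (cpd par Q \<alpha>)"
  unfolding loc_def cpd_def by (metis (no_types, lifting) insert_iff map_cong)

lemma PiE_UNIV_all: "PiE UNIV (\<lambda>_. UNIV) = UNIV"
  by (auto simp: PiE_UNIV_domain)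

lemma probU_alt:
  "probU par Q f \<alpha> E = (\<Sum>x\<in>PiE UNIV (\<lambda>_. UNIV). (if E (f \<circ> x) then 1 else 0) * (\<Prod>t\<in>UNIV. cpd par Q \<alpha> t x))"
proof -
  have "probU par Q f \<alpha> E = (\<Sum>x\<in>{x\<in>UNIV. E (f \<circ> x)}. bn_joint par Q \<alpha> x)"
    unfolding probU_def by simp
  also have "\<dots> = (\<Sum>x\<in>UNIV. if E (f \<circ> x) then bn_joint par Q \<alpha> x else 0)"
    by (rule sum.inter_filter) simp
  finally show ?thesis unfolding PiE_UNIV_all bn_joint_def cpd_def by (auto intro!: sum.cong)
qed

lemma stoch_cpd:
  assumes dag: "is_dag par" and parents: "\<forall>v. par v = [] \<or> length (par v) = k"
    and alpha: "init_dist par \<alpha>" and kernel: "is_kernel k Q"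
  shows "(\<Sum>c\<in>UNIV. cpd par Q \<alpha> t (y(t:=c))) = 1"
proof (cases "par t = []")
  case True then show ?thesis using alpha unfolding init_dist_def cpd_def by simp
next
  case False
  have acyc: "acyclic (parent_rel par)" using dag unfolding is_dag_def by simp
  have m: "map (y(t:=c)) (par t) = map y (par t)" for c
    using not_self_parent[OF acyc, of t] by (auto intro!: map_cong)
  have "(\<Sum>c\<in>UNIV. cpd par Q \<alpha> t (y(t:=c))) = (\<Sum>c\<in>UNIV. Q (map y (par t)) c)"
    unfolding cpd_def m using False by simp
  also have "\<dots> = 1" using False parents kernel unfolding is_kernel_def by (metis length_map)
  finally show ?thesis .
qed

lemma reduce_v:
  fixes par :: "'v::finite \<Rightarrow> 'v list" and Q :: "'a::finite list \<Rightarrow> 'a \<Rightarrow> real"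
  assumes dag: "is_dag par" and parents: "\<forall>v. par v = [] \<or> length (par v) = k"
    and alpha: "init_dist par \<alpha>" and kernel: "is_kernel k Q"
    and pv: "par v \<noteq> []" and aR: "ancestral par R" and vR: "insert v (set (par v)) \<subseteq> R"
    and sinkv: "\<forall>t\<in>R. v \<notin> set (par t)"
    and Edep: "\<forall>x y. (\<forall>t\<in>insert v (set (par v)). x t = y t) \<longrightarrow> E x = E y"
  shows "(\<Sum>x\<in>PiE UNIV (\<lambda>_. UNIV). E x * (\<Prod>t\<in>UNIV. cpd par Q \<alpha> t x))
    = (\<Sum>y\<in>PiE (R-{v}) (\<lambda>_. UNIV). (\<Sum>c\<in>UNIV. E (y(v:=c)) * Q (map y (par v)) c) * (\<Prod>t\<in>R-{v}. cpd par Q \<alpha> t y))"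
proof -
  have acyc: "acyclic (parent_rel par)" using dag unfolding is_dag_def by simp
  have "(\<Sum>x\<in>PiE UNIV (\<lambda>_. UNIV). E x * (\<Prod>t\<in>UNIV. cpd par Q \<alpha> t x))
      = (\<Sum>x\<in>PiE R (\<lambda>_. UNIV). E x * (\<Prod>t\<in>R. cpd par Q \<alpha> t x))"
  proof (rule marg[OF acyc loc_cpd aR _ _ refl])
    show "\<forall>x y. (\<forall>t\<in>R. x t = y t) \<longrightarrow> E x = E y" using Edep vR by (metis subsetD)
  qed (use stoch_cpd[OF dag parents alpha kernel] in \<open>auto simp: ancestral_def\<close>)
  also have "\<dots> = (\<Sum>y\<in>PiE (R-{v}) (\<lambda>_. UNIV). \<Sum>c\<in>UNIV. E (y(v:=c)) * (\<Prod>t\<in>R. cpd par Q \<alpha> t (y(v:=c))))"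
    using vR by (intro sum_PiE_remove) auto
  also have "\<dots> = (\<Sum>y\<in>PiE (R-{v}) (\<lambda>_. UNIV). (\<Sum>c\<in>UNIV. E (y(v:=c)) * Q (map y (par v)) c) * (\<Prod>t\<in>R-{v}. cpd par Q \<alpha> t y))"
  proof (rule sum.cong[OF refl])
    fix y :: "'v \<Rightarrow> 'a"
    have m: "map (y(v:=c)) (par v) = map y (par v)" for c
      using not_self_parent[OF acyc, of v] by (auto intro!: map_cong)
    have "(\<Prod>t\<in>R. cpd par Q \<alpha> t (y(v:=c))) = cpd par Q \<alpha> v (y(v:=c)) * (\<Prod>t\<in>R-{v}. cpd par Q \<alpha> t y)" for c
      using vR sinkv by (intro prod_split[OF loc_cpd]) auto
    then show "(\<Sum>c\<in>UNIV. E (y(v:=c)) * (\<Prod>t\<in>R. cpd par Q \<alpha> t (y(v:=c)))) = (\<Sum>c\<in>UNIV. E (y(v:=c)) * Q (map y (par v)) c) * (\<Prod>t\<in>R-{v}. cpd par Q \<alpha> t y)"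
      using pv m unfolding cpd_def by (simp add: sum_distrib_right mult_ac)
  qed
  finally show ?thesis .
qed

lemma ex_assign: "distinct xs \<Longrightarrow> length xs = length w \<Longrightarrow> \<exists>z. map z xs = w"
proof (induction xs arbitrary: w)
  case Nil then show ?case by simp
next
  case (Cons x xs)
  then obtain a w' where w: "w = a # w'" by (cases w) auto
  then obtain z where z: "map z xs = w'" using Cons by auto
  have "map (z(x:=a)) xs = map z xs" using Cons.prems(1) by (auto intro!: map_cong)
  then have h: "map (z(x:=a)) (x#xs) = a # w'" using z by (simp only: list.map fun_upd_same)
  show ?case unfolding w by (rule exI[where x="z(x:=a)"], rule h)
qed

lemma sum_fibers:
  assumes "finite (UNIV::'b set)"
  shows "(\<Sum>b\<in>(UNIV::'b set). \<Sum>c\<in>{c. f c = b}. g c) = (\<Sum>c\<in>(UNIV::'a::finite set). g c)"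
  using sum.group[of UNIV UNIV f g] assms by simp

lemma sum_if_filter: "(\<Sum>c\<in>(UNIV::'a::finite set). (if P c then 1 else 0) * (g c::real)) = (\<Sum>c\<in>{c. P c}. g c)"
proof -
  have "(\<Sum>c\<in>{c\<in>UNIV. P c}. g c) = (\<Sum>c\<in>UNIV. if P c then g c else 0)" by (rule sum.inter_filter) simp
  then show ?thesis by (auto intro!: sum.cong)
qed

definition az :: "('v \<Rightarrow> 'a) \<Rightarrow> 'v \<Rightarrow> 'a \<Rightarrow> real" where
  "az z t a = (if a = z t then 1 else 0)"

lemma init_az: "init_dist par (az z)"
  unfolding init_dist_def az_def by simp

lemma point_mass:
  fixes par :: "'v::finite \<Rightarrow> 'v list" and Q :: "'a::finite list \<Rightarrow> 'a \<Rightarrow> real"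
  assumes dag: "is_dag par" and parents: "\<forall>v. par v = [] \<or> length (par v) = k"
    and kernel: "is_kernel k Q"
    and pv: "par v \<noteq> []" and src: "\<forall>p\<in>set (par v). par p = []"
    and Edep: "\<forall>x y. (\<forall>t\<in>insert v (set (par v)). x t = y t) \<longrightarrow> E x = E y"
  shows "(\<Sum>x\<in>PiE UNIV (\<lambda>_. UNIV). E x * (\<Prod>t\<in>UNIV. cpd par Q (az z) t x))
    = (\<Sum>c\<in>UNIV. E ((restrict z (set (par v)))(v:=c)) * Q (map z (par v)) c)"
proof -
  have acyc: "acyclic (parent_rel par)" using dag unfolding is_dag_def by simp
  have vv: "v \<notin> set (par v)" using not_self_parent[OF acyc] .
  define R where "R = insert v (set (par v))"
  have RR: "R - {v} = set (par v)" unfolding R_def using vv by auto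
  define G where "G y = (\<Sum>c\<in>UNIV. E (y(v:=c)) * Q (map y (par v)) c)" for y
  have mz: "map (restrict z (set (par v))) (par v) = map z (par v)" by simp
  have "(\<Sum>x\<in>PiE UNIV (\<lambda>_. UNIV). E x * (\<Prod>t\<in>UNIV. cpd par Q (az z) t x))
     = (\<Sum>y\<in>PiE (R-{v}) (\<lambda>_. UNIV). G y * (\<Prod>t\<in>R-{v}. cpd par Q (az z) t y))"
    unfolding G_def
    by (rule reduce_v[OF dag parents init_az kernel pv _ _ _ Edep])
       (use src vv in \<open>auto simp: R_def ancestral_def\<close>)
  also have "\<dots> = (\<Sum>y\<in>PiE (set (par v)) (\<lambda>_. UNIV). if y = restrict z (set (par v)) then G y else 0)"
    unfolding RR
  proof (rule sum.cong[OF refl])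
    fix y assume y: "y \<in> PiE (set (par v)) (\<lambda>_. (UNIV::'a set))"
    have "(\<Prod>t\<in>set (par v). cpd par Q (az z) t y) = (\<Prod>t\<in>set (par v). if y t = z t then 1 else 0)"
      using src by (intro prod.cong) (auto simp: cpd_def az_def)
    also have "\<dots> = (if y = restrict z (set (par v)) then 1 else 0)"
    proof (cases "y = restrict z (set (par v))")
      case True then show ?thesis by simp
    next
      case False
      have "\<exists>t. t \<in> set (par v) \<and> y t \<noteq> z t"
      proof (rule ccontr)
        assume "\<not> (\<exists>t. t \<in> set (par v) \<and> y t \<noteq> z t)"
        then have "y = restrict z (set (par v))" using y
          by (auto simp: PiE_def extensional_def restrict_def intro!: ext)
        then show False using False by simp
      qed
      then obtain t where "t \<in> set (par v)" "y t \<noteq> z t" by blast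
      then show ?thesis using False by (intro trans[OF prod_zero]) auto
    qed
    finally show "G y * (\<Prod>t\<in>set (par v). cpd par Q (az z) t y) = (if y = restrict z (set (par v)) then G y else 0)"
      by simp
  qed
  also have "\<dots> = G (restrict z (set (par v)))"
    by (subst sum.delta) (auto intro: finite_PiE)
  also have "G (restrict z (set (par v))) = (\<Sum>c\<in>UNIV. E ((restrict z (set (par v)))(v:=c)) * Q (map z (par v)) c)"
    unfolding G_def mz ..
  finally show ?thesis .
qed

lemma pm_eval:
  fixes par :: "'v::finite \<Rightarrow> 'v list" and Q :: "'a::finite list \<Rightarrow> 'a \<Rightarrow> real" and f :: "'a \<Rightarrow> 'b"
  assumes dag: "is_dag par" and parents: "\<forall>v. par v = [] \<or> length (par v) = k"
    and kernel: "is_kernel k Q"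
    and pv: "par v \<noteq> []" and src: "\<forall>p\<in>set (par v). par p = []"
    and mz: "map f (map z (par v)) = bs"
  shows "probU par Q f (az z) (\<lambda>u. u v = b \<and> map u (par v) = bs) = (\<Sum>c\<in>{c. f c = b}. Q (map z (par v)) c)"
    and "probU par Q f (az z) (\<lambda>u. map u (par v) = bs) = 1"
proof -
  have acyc: "acyclic (parent_rel par)" using dag unfolding is_dag_def by simp
  have vv: "v \<notin> set (par v)" using not_self_parent[OF acyc] .
  define r where "r = restrict z (set (par v))"
  have mr: "map (f \<circ> r(v:=c)) (par v) = bs" for c
  proof -
    have e: "map (f \<circ> r(v:=c)) (par v) = map (f \<circ> z) (par v)"
      using vv by (intro map_cong) (auto simp: r_def)
    show ?thesis using e mz by (simp only: map_map)
  qed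
  have len: "length (map z (par v)) = k" using parents pv by (metis length_map)
  have "probU par Q f (az z) (\<lambda>u. u v = b \<and> map u (par v) = bs)
      = (\<Sum>c\<in>UNIV. (if f c = b then 1 else 0) * Q (map z (par v)) c)"
    unfolding probU_alt
  proof (subst point_mass[OF dag parents kernel pv src])
    show "\<forall>x y. (\<forall>t\<in>insert v (set (par v)). x t = y t) \<longrightarrow>
       (if (f \<circ> x) v = b \<and> map (f \<circ> x) (par v) = bs then 1 else (0::real)) = (if (f \<circ> y) v = b \<and> map (f \<circ> y) (par v) = bs then 1 else 0)"
    proof (intro allI impI)
      fix x y :: "'v \<Rightarrow> 'a" assume H: "\<forall>t\<in>insert v (set (par v)). x t = y t"
      have m: "map (f \<circ> x) (par v) = map (f \<circ> y) (par v)" using H by (intro map_cong) auto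
      have xv: "x v = y v" using H by simp
      show "(if (f \<circ> x) v = b \<and> map (f \<circ> x) (par v) = bs then 1 else (0::real)) = (if (f \<circ> y) v = b \<and> map (f \<circ> y) (par v) = bs then 1 else 0)"
        by (simp only: m xv comp_apply)
    qed
  qed (simp add: mr[unfolded r_def])
  also have "\<dots> = (\<Sum>c\<in>{c. f c = b}. Q (map z (par v)) c)" by (rule sum_if_filter)
  finally show "probU par Q f (az z) (\<lambda>u. u v = b \<and> map u (par v) = bs) = (\<Sum>c\<in>{c. f c = b}. Q (map z (par v)) c)" .
  have "probU par Q f (az z) (\<lambda>u. map u (par v) = bs)
      = (\<Sum>c\<in>UNIV. Q (map z (par v)) c)"
    unfolding probU_alt
  proof (subst point_mass[OF dag parents kernel pv src])
    show "\<forall>x y. (\<forall>t\<in>insert v (set (par v)). x t = y t) \<longrightarrow>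
       (if map (f \<circ> x) (par v) = bs then 1 else (0::real)) = (if map (f \<circ> y) (par v) = bs then 1 else 0)"
    proof (intro allI impI)
      fix x y :: "'v \<Rightarrow> 'a" assume H: "\<forall>t\<in>insert v (set (par v)). x t = y t"
      have m: "map (f \<circ> x) (par v) = map (f \<circ> y) (par v)" using H by (intro map_cong) auto
      show "(if map (f \<circ> x) (par v) = bs then 1 else (0::real)) = (if map (f \<circ> y) (par v) = bs then 1 else 0)"
        by (simp only: m)
    qed
  qed (simp add: mr[unfolded r_def])
  also have "\<dots> = 1" using kernel len unfolding is_kernel_def by blast
  finally show "probU par Q f (az z) (\<lambda>u. map u (par v) = bs) = 1" .
qed

lemma fwd:
  fixes par :: "'v::finite \<Rightarrow> 'v list" and Q :: "'a::finite list \<Rightarrow> 'a \<Rightarrow> real" and f :: "'a \<Rightarrow> 'b"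
  assumes dag: "is_dag par" and parents: "\<forall>v. par v = [] \<or> length (par v) = k"
    and depth1: "\<exists>v. depth par v = 1" and kernel: "is_kernel k Q" and D: "D3 par Q f"
  shows "\<forall>w w' b. length w = k \<and> length w' = k \<and> map f w = map f w' \<longrightarrow>
       (\<Sum>c\<in>{c. f c = b}. Q w c) = (\<Sum>c\<in>{c. f c = b}. Q w' c)"
proof (intro allI impI, elim conjE)
  fix w w' b assume lw: "length w = k" and lw': "length w' = k" and fw: "map f w = map f w'"
  obtain v where "depth par v = 1" using depth1 by blast
  then have pv: "par v \<noteq> []" and src: "\<forall>p\<in>set (par v). par p = []" using depth_one[OF dag] by auto
  have lv: "length (par v) = k" using parents pv by blast
  have dv: "distinct (par v)" using dag unfolding is_dag_def by simp
  obtain z where z: "map z (par v) = w" using ex_assign[OF dv] lv lw by metis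
  obtain z' where z': "map z' (par v) = w'" using ex_assign[OF dv] lv lw' by metis
  define bs where "bs = map f w"
  have e1: "probU par Q f (az z) (\<lambda>u. u v = b \<and> map u (par v) = bs) = (\<Sum>c\<in>{c. f c = b}. Q w c)"
       "probU par Q f (az z) (\<lambda>u. map u (par v) = bs) = 1"
    using pm_eval(1)[OF dag parents kernel pv src, where f=f and z=z and bs=bs and b=b] pm_eval(2)[OF dag parents kernel pv src, where f=f and z=z and bs=bs] z unfolding bs_def by auto
  have e2: "probU par Q f (az z') (\<lambda>u. u v = b \<and> map u (par v) = bs) = (\<Sum>c\<in>{c. f c = b}. Q w' c)"
       "probU par Q f (az z') (\<lambda>u. map u (par v) = bs) = 1"
    using pm_eval(1)[OF dag parents kernel pv src, where f=f and z=z' and bs=bs and b=b] pm_eval(2)[OF dag parents kernel pv src, where f=f and z=z' and bs=bs] z' fw unfolding bs_def by auto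
  have "probU par Q f (az z) (\<lambda>u. u v = b \<and> map u (par v) = bs) / probU par Q f (az z) (\<lambda>u. map u (par v) = bs)
      = probU par Q f (az z') (\<lambda>u. u v = b \<and> map u (par v) = bs) / probU par Q f (az z') (\<lambda>u. map u (par v) = bs)"
  proof -
    have D2: "\<forall>v bs b \<alpha>1 \<alpha>2. par v \<noteq> [] \<and> init_dist par \<alpha>1 \<and> init_dist par \<alpha>2
        \<and> probU par Q f \<alpha>1 (\<lambda>u. map u (par v) = bs) > 0
        \<and> probU par Q f \<alpha>2 (\<lambda>u. map u (par v) = bs) > 0
        \<longrightarrow> probU par Q f \<alpha>1 (\<lambda>u. u v = b \<and> map u (par v) = bs) / probU par Q f \<alpha>1 (\<lambda>u. map u (par v) = bs)
          = probU par Q f \<alpha>2 (\<lambda>u. u v = b \<and> map u (par v) = bs) / probU par Q f \<alpha>2 (\<lambda>u. map u (par v) = bs)"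
      using D unfolding D3_def by blast
    show ?thesis
      by (rule D2[rule_format, of v "az z" "az z'" bs b]) (simp_all add: pv init_az e1(2) e2(2))
  qed
  then show "(\<Sum>c\<in>{c. f c = b}. Q w c) = (\<Sum>c\<in>{c. f c = b}. Q w' c)" using e1 e2 by simp
qed

definition Qb :: "('a list \<Rightarrow> 'a \<Rightarrow> real) \<Rightarrow> ('a \<Rightarrow> 'b) \<Rightarrow> 'b list \<Rightarrow> 'b \<Rightarrow> real" where
  "Qb Q f bs b = (\<Sum>c\<in>{c. f c = b}. Q (map (inv f) bs) c)"

lemma KCfact:
  assumes KC: "\<forall>w w' b. length w = k \<and> length w' = k \<and> map f w = map f w' \<longrightarrow>
       (\<Sum>c\<in>{c. f c = b}. Q w c) = (\<Sum>c\<in>{c. f c = b}. Q w' c)"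
    and surj: "surj f" and lw: "length w = k"
  shows "(\<Sum>c\<in>{c. f c = b}. Q w c) = Qb Q f (map f w) b"
proof -
  have "map f (map (inv f) (map f w)) = map f w"
    by (simp add: surj_f_inv_f[OF surj])
  then show ?thesis unfolding Qb_def using KC lw by (metis length_map)
qed

lemma ratio:
  fixes par :: "'v::finite \<Rightarrow> 'v list" and Q :: "'a::finite list \<Rightarrow> 'a \<Rightarrow> real" and f :: "'a \<Rightarrow> 'b"
  assumes dag: "is_dag par" and parents: "\<forall>v. par v = [] \<or> length (par v) = k"
    and kernel: "is_kernel k Q" and alpha: "init_dist par \<alpha>"
    and KC: "\<forall>w w' b. length w = k \<and> length w' = k \<and> map f w = map f w' \<longrightarrow>
       (\<Sum>c\<in>{c. f c = b}. Q w c) = (\<Sum>c\<in>{c. f c = b}. Q w' c)"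
    and surj: "surj f" and pv: "par v \<noteq> []"
  shows "probU par Q f \<alpha> (\<lambda>u. u v = b \<and> map u (par v) = bs) = Qb Q f bs b * probU par Q f \<alpha> (\<lambda>u. map u (par v) = bs)"
proof -
  have acyc: "acyclic (parent_rel par)" using dag unfolding is_dag_def by simp
  have vv: "v \<notin> set (par v)" using not_self_parent[OF acyc] .
  have lv: "length (par v) = k" using parents pv by blast
  define R where "R = {t. (t, v) \<in> (parent_rel par)\<^sup>*}"
  have aR: "ancestral par R" unfolding ancestral_def R_def parent_rel_def
    by (auto intro: converse_rtrancl_into_rtrancl)
  have vR: "insert v (set (par v)) \<subseteq> R" unfolding R_def parent_rel_def by auto
  have sinkv: "\<forall>t\<in>R. v \<notin> set (par t)"
  proof (intro ballI notI)
    fix t assume t: "t \<in> R" "v \<in> set (par t)"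
    then have "(v, t) \<in> parent_rel par" "(t, v) \<in> (parent_rel par)\<^sup>*" unfolding R_def parent_rel_def by auto
    then have "(v, v) \<in> (parent_rel par)\<^sup>+" by auto
    then show False using acyc unfolding acyclic_def by blast
  qed
  have mv: "map (f \<circ> y(v:=c)) (par v) = map (f \<circ> y) (par v)" for y :: "'v \<Rightarrow> 'a" and c
    using vv by (intro map_cong) auto
  have mv': "map (y(v:=c)) (par v) = map y (par v)" for y :: "'v \<Rightarrow> 'a" and c
    using vv by (intro map_cong) auto
  define P where "P y = (\<Prod>t\<in>R-{v}. cpd par Q \<alpha> t y)" for y
  have num: "probU par Q f \<alpha> (\<lambda>u. u v = b \<and> map u (par v) = bs)
     = (\<Sum>y\<in>PiE (R-{v}) (\<lambda>_. UNIV). (\<Sum>c\<in>UNIV. (if f c = b \<and> map (f \<circ> y) (par v) = bs then 1 else 0) * Q (map y (par v)) c) * P y)"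
    unfolding probU_alt P_def
  proof (subst reduce_v[OF dag parents alpha kernel pv aR vR sinkv])
    show "\<forall>x y. (\<forall>t\<in>insert v (set (par v)). x t = y t) \<longrightarrow>
       (if (f \<circ> x) v = b \<and> map (f \<circ> x) (par v) = bs then 1 else (0::real)) = (if (f \<circ> y) v = b \<and> map (f \<circ> y) (par v) = bs then 1 else 0)"
    proof (intro allI impI)
      fix x y :: "'v \<Rightarrow> 'a" assume H: "\<forall>t\<in>insert v (set (par v)). x t = y t"
      have m: "map (f \<circ> x) (par v) = map (f \<circ> y) (par v)" using H by (intro map_cong) auto
      have xv: "x v = y v" using H by simp
      show "(if (f \<circ> x) v = b \<and> map (f \<circ> x) (par v) = bs then 1 else (0::real)) = (if (f \<circ> y) v = b \<and> map (f \<circ> y) (par v) = bs then 1 else 0)"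
        by (simp only: m xv comp_apply)
    qed
  qed (simp add: mv)
  have den: "probU par Q f \<alpha> (\<lambda>u. map u (par v) = bs)
     = (\<Sum>y\<in>PiE (R-{v}) (\<lambda>_. UNIV). (\<Sum>c\<in>UNIV. (if map (f \<circ> y) (par v) = bs then 1 else 0) * Q (map y (par v)) c) * P y)"
    unfolding probU_alt P_def
  proof (subst reduce_v[OF dag parents alpha kernel pv aR vR sinkv])
    show "\<forall>x y. (\<forall>t\<in>insert v (set (par v)). x t = y t) \<longrightarrow>
       (if map (f \<circ> x) (par v) = bs then 1 else (0::real)) = (if map (f \<circ> y) (par v) = bs then 1 else 0)"
    proof (intro allI impI)
      fix x y :: "'v \<Rightarrow> 'a" assume H: "\<forall>t\<in>insert v (set (par v)). x t = y t"
      have m: "map (f \<circ> x) (par v) = map (f \<circ> y) (par v)" using H by (intro map_cong) auto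
      show "(if map (f \<circ> x) (par v) = bs then 1 else (0::real)) = (if map (f \<circ> y) (par v) = bs then 1 else 0)"
        by (simp only: m)
    qed
  qed (simp add: mv)
  have inner: "(\<Sum>c\<in>UNIV. (if f c = b \<and> map (f \<circ> y) (par v) = bs then 1 else 0) * Q (map y (par v)) c)
     = Qb Q f bs b * (\<Sum>c\<in>UNIV. (if map (f \<circ> y) (par v) = bs then 1 else 0) * Q (map y (par v)) c)" for y :: "'v \<Rightarrow> 'a"
  proof (cases "map (f \<circ> y) (par v) = bs")
    case True
    have ly: "length (map y (par v)) = k" using lv by simp
    have "(\<Sum>c\<in>UNIV. (if f c = b \<and> map (f \<circ> y) (par v) = bs then 1 else 0) * Q (map y (par v)) c)
        = (\<Sum>c\<in>{c. f c = b}. Q (map y (par v)) c)"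
      using True sum_if_filter[of "\<lambda>c. f c = b" "Q (map y (par v))"] by simp
    also have "\<dots> = Qb Q f bs b" using KCfact[OF KC surj ly, of b] True by simp
    also have "(\<Sum>c\<in>UNIV. Q (map y (par v)) c) = 1" using kernel ly unfolding is_kernel_def by blast
    then have "Qb Q f bs b = Qb Q f bs b * (\<Sum>c\<in>UNIV. (if map (f \<circ> y) (par v) = bs then 1 else 0) * Q (map y (par v)) c)"
      using True by simp
    finally show ?thesis .
  next
    case False then show ?thesis by simp
  qed
  show ?thesis unfolding num den inner by (simp add: sum_distrib_left mult_ac)
qed

definition qq :: "('v \<Rightarrow> 'v list) \<Rightarrow> ('a list \<Rightarrow> 'a \<Rightarrow> real) \<Rightarrow> ('a \<Rightarrow> 'b) \<Rightarrow> ('v \<Rightarrow> 'a \<Rightarrow> real) \<Rightarrow> nat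
    \<Rightarrow> 'v \<Rightarrow> 'b list \<Rightarrow> 'b \<Rightarrow> real" where
  "qq par Q f \<alpha> k t bs b = (if par t = [] then (\<Sum>c\<in>{c. f c = b}. \<alpha> t c)
     else if length bs = k then Qb Q f bs b else (if b = f undefined then 1 else 0))"

lemma bwd:
  fixes par :: "'v::finite \<Rightarrow> 'v list" and Q :: "'a::finite list \<Rightarrow> 'a \<Rightarrow> real" and f :: "'a \<Rightarrow> 'b"
  assumes dag: "is_dag par" and parents: "\<forall>v. par v = [] \<or> length (par v) = k"
    and kernel: "is_kernel k Q" and surj: "surj f"
    and KC: "\<forall>w w' b. length w = k \<and> length w' = k \<and> map f w = map f w' \<longrightarrow>
       (\<Sum>c\<in>{c. f c = b}. Q w c) = (\<Sum>c\<in>{c. f c = b}. Q w' c)"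
  shows "D3 par Q f"
  unfolding D3_def
proof (intro conjI allI impI)
  have acyc: "acyclic (parent_rel par)" using dag unfolding is_dag_def by simp
  have finb: "finite (UNIV::'b set)" using surj by (metis finite finite_imageI)
  fix \<alpha> :: "'v \<Rightarrow> 'a \<Rightarrow> real" assume alpha: "init_dist par \<alpha>"
  show "\<exists>q :: 'v \<Rightarrow> 'b list \<Rightarrow> 'b \<Rightarrow> real.
           (\<forall>v bs. (\<forall>b. 0 \<le> q v bs b) \<and> sum (q v bs) UNIV = 1) \<and>
           (\<forall>u. probU par Q f \<alpha> (\<lambda>u'. u' = u) = (\<Prod>v\<in>UNIV. q v (map u (par v)) (u v)))"
  proof (intro exI[of _ "qq par Q f \<alpha> k"] conjI allI)
    fix t and bs :: "'b list" and b
    show "0 \<le> qq par Q f \<alpha> k t bs b"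
      using alpha kernel unfolding qq_def Qb_def init_dist_def is_kernel_def
      by (auto intro!: sum_nonneg)
  next
    fix t and bs :: "'b list"
    show "sum (qq par Q f \<alpha> k t bs) UNIV = 1"
    proof (cases "par t = []")
      case True
      then show ?thesis using alpha sum_fibers[OF finb, where f=f and g="\<alpha> t"] unfolding qq_def init_dist_def by simp
    next
      case False
      show ?thesis
      proof (cases "length bs = k")
        case True
        then show ?thesis using False kernel sum_fibers[OF finb, where f=f and g="Q (map (inv f) bs)"]
          unfolding qq_def Qb_def is_kernel_def by simp
      next
        case False2: False
        then show ?thesis using False finb unfolding qq_def by simp
      qed
    qed
  next
    fix u :: "'v \<Rightarrow> 'b"
    define g where "g t x = (if f (x t) = u t then 1 else 0) * cpd par Q \<alpha> t x" for t and x :: "'v \<Rightarrow> 'a"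
    have lg: "loc par g" using loc_cpd[of par Q \<alpha>] unfolding loc_def g_def by (metis insertI1)
    have "probU par Q f \<alpha> (\<lambda>u'. u' = u) = (\<Sum>x\<in>PiE UNIV (\<lambda>_. UNIV). \<Prod>t\<in>UNIV. g t x)"
      unfolding probU_alt
    proof (rule sum.cong[OF refl])
      fix x :: "'v \<Rightarrow> 'a"
      have "(\<Prod>t\<in>UNIV. g t x) = (\<Prod>t\<in>UNIV. (if f (x t) = u t then 1 else 0)) * (\<Prod>t\<in>UNIV. cpd par Q \<alpha> t x)"
        unfolding g_def by (rule prod.distrib)
      also have "(\<Prod>t\<in>UNIV. (if f (x t) = u t then 1 else (0::real))) = (if f \<circ> x = u then 1 else 0)"
      proof (cases "f \<circ> x = u")
        case True then show ?thesis by auto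
      next
        case False
        then obtain t where "f (x t) \<noteq> u t" by (metis comp_apply ext)
        then show ?thesis using False by (intro trans[OF prod_zero]) auto
      qed
      finally show "(if f \<circ> x = u then 1 else 0) * (\<Prod>t\<in>UNIV. cpd par Q \<alpha> t x) = (\<Prod>t\<in>UNIV. g t x)"
        by simp
    qed
    also have "\<dots> = (\<Prod>t\<in>UNIV. qq par Q f \<alpha> k t (map u (par t)) (u t))"
    proof (rule factor[OF acyc lg _ refl])
      show "ancestral par UNIV" unfolding ancestral_def by simp
      show "\<forall>t y. (\<Sum>c\<in>UNIV. g t (y(t:=c))) = qq par Q f \<alpha> k t (map u (par t)) (u t) \<or> (\<exists>s\<in>set (par t). g s y = 0)"
      proof (intro allI)
        fix t and y :: "'v \<Rightarrow> 'a"
        have m: "map (y(t:=c)) (par t) = map y (par t)" for c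
          using not_self_parent[OF acyc, of t] by (intro map_cong) auto
        show "(\<Sum>c\<in>UNIV. g t (y(t:=c))) = qq par Q f \<alpha> k t (map u (par t)) (u t) \<or> (\<exists>s\<in>set (par t). g s y = 0)"
        proof (cases "par t = []")
          case True
          have "(\<Sum>c\<in>UNIV. g t (y(t:=c))) = (\<Sum>c\<in>UNIV. (if f c = u t then 1 else 0) * \<alpha> t c)"
            unfolding g_def cpd_def using True by simp
          also have "\<dots> = qq par Q f \<alpha> k t (map u (par t)) (u t)"
            unfolding sum_if_filter qq_def using True by simp
          finally show ?thesis by blast
        next
          case False
          show ?thesis
          proof (cases "\<exists>s\<in>set (par t). f (y s) \<noteq> u s")
            case True
            then obtain s where "s \<in> set (par t)" "f (y s) \<noteq> u s" by blast
            then have "g s y = 0" unfolding g_def by simp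
            then show ?thesis using \<open>s \<in> set (par t)\<close> by blast
          next
            case False2: False
            have mu: "map f (map y (par t)) = map u (par t)" using False2 by (auto intro!: map_cong)
            have ly: "length (map y (par t)) = k" using parents False by (metis length_map)
            have "(\<Sum>c\<in>UNIV. g t (y(t:=c))) = (\<Sum>c\<in>UNIV. (if f c = u t then 1 else 0) * Q (map y (par t)) c)"
              unfolding g_def cpd_def m using False by simp
            also have "\<dots> = (\<Sum>c\<in>{c. f c = u t}. Q (map y (par t)) c)" by (rule sum_if_filter)
            also have "\<dots> = Qb Q f (map u (par t)) (u t)" using KCfact[OF KC surj ly, of "u t"] by (simp only: mu)
            also have "\<dots> = qq par Q f \<alpha> k t (map u (par t)) (u t)"
              unfolding qq_def using False ly mu by (metis length_map)
            finally show ?thesis by blast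
          qed
        qed
      qed
    qed
    finally show "probU par Q f \<alpha> (\<lambda>u'. u' = u) = (\<Prod>t\<in>UNIV. qq par Q f \<alpha> k t (map u (par t)) (u t))" .
  qed
next
  fix v bs b \<alpha>1 \<alpha>2
  assume H: "par v \<noteq> [] \<and> init_dist par \<alpha>1 \<and> init_dist par \<alpha>2
        \<and> probU par Q f \<alpha>1 (\<lambda>u. map u (par v) = bs) > 0
        \<and> probU par Q f \<alpha>2 (\<lambda>u. map u (par v) = bs) > 0"
  then show "probU par Q f \<alpha>1 (\<lambda>u. u v = b \<and> map u (par v) = bs) / probU par Q f \<alpha>1 (\<lambda>u. map u (par v) = bs)
          = probU par Q f \<alpha>2 (\<lambda>u. u v = b \<and> map u (par v) = bs) / probU par Q f \<alpha>2 (\<lambda>u. map u (par v) = bs)"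
    using ratio[OF dag parents kernel _ KC surj, of \<alpha>1 v b bs] ratio[OF dag parents kernel _ KC surj, of \<alpha>2 v b bs]
    by simp
qed


theorem mainTheorem14:
  fixes par :: "'v::finite \<Rightarrow> 'v list"
    and k :: nat
    and \<alpha> :: "'v \<Rightarrow> 'a::finite \<Rightarrow> real"
    and Q :: "'a list \<Rightarrow> 'a \<Rightarrow> real"
    and f :: "'a \<Rightarrow> 'b"
  assumes dag: "is_dag par"
    and k_pos: "1 \<le> k"
    and parents: "\<forall>v. par v = [] \<or> length (par v) = k"
    and depth_one: "\<exists>v. depth par v = 1"
    and alpha: "init_dist par \<alpha>"
    and kernel: "is_kernel k Q"
    and full_support: "\<forall>x. bn_joint par Q \<alpha> x > 0"
    and surj: "surj f"
  shows "D3 par Q f \<longleftrightarrow>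
    (\<forall>w w' b. length w = k \<and> length w' = k \<and> map f w = map f w' \<longrightarrow>
       (\<Sum>c\<in>{c. f c = b}. Q w c) = (\<Sum>c\<in>{c. f c = b}. Q w' c))"
  using fwd[OF dag parents depth_one kernel] bwd[OF dag parents kernel surj] by blast

end
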